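(* Let $R$ be a finite principal left ideal ring, $<$ a respectful order on $R$, $B$ an ordered basis of $R^n$, and $P$ a left multiplicative property on $R^n$ with $P[0]$ true. Then the lexicode $C(<,B,P)$ is maximal with respect to inclusion among all left submodules $C\subseteq R^n$ such that $P[x]$ holds for all $x\in C$; i.e., there is no left submodule $C$ with $C(<,B,P)\subsetneq C\subseteq R^n$ all of whose elements satisfy $P$.
   Context: $R^\ast$ is the unit group of $R$. A property $P:R^n\to\{\text{true},\text{false}\}$ is left multiplicative if $P[ux]=P[x]$ for all $u\in R^\ast$, $x\in R^n$. A total order $<$ on $R$ is respectful if for all nonzero $x,y\in R$ with $Rx\supsetneq Ry$ there is $\alpha\in R^\ast$ with $\alpha x<uy$ for all $u\in R^\ast$. Fix an ordered basis $B=(b_1,\dots,b_n)$ of the free left module $R^n$; put $V_0=\{0\}$ and $V_i=Rb_1+\dots+Rb_i$. The lexicographic order on $R^n$: if $x\in V_{i-1}$ and $y\in V_i\setminus V_{i-1}$ then $x<y$; if $x\ne y$ both lie in $V_i\setminus V_{i-1}$, write $x=\sum_{j\le i}x_jb_j$, $y=\sum_{j\le i}y_jb_j$, let $k$ be the largest index with $x_k\ne y_k$, and set $x<y$ iff $x_k<y_k$ in $R$. Fix a set $\Gamma\subseteq R$ containing one generator of each nonzero left ideal of $R$. Greedy algorithm: $C_0=\{0\}$; for $i=1,\dots,n$, let $a_i$ be the smallest vector of $V_i\setminus V_{i-1}$ (if any) such that $P[\gamma a_i+c]$ is true for all $\gamma\in\Gamma$ and all $c\in C_{i-1}$; if such $a_i$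 exists set $C_i=Ra_i+C_{i-1}$, otherwise $C_i=C_{i-1}$. The lexicode is $C(<,B,P):=C_n$. *)

theory Defs
  imports Main
begin

text \<open>The ring R is a type 'a of class ring_1 (possibly noncommutative) with finite.
  R^n is modelled as functions nat => 'a vanishing from index n on.
  Indices are 0-based: basis vector B j (j < n) is the paper's b_(j+1).\<close>

definition is_unit :: "'a::ring_1 \<Rightarrow> bool" where
  "is_unit u \<longleftrightarrow> (\<exists>v. u * v = 1 \<and> v * u = 1)"

definition left_ideal :: "'a::ring_1 set \<Rightarrow> bool" where
  "left_ideal I \<longleftrightarrow> 0 \<in> I \<and> (\<forall>x\<in>I. \<forall>y\<in>I. x + y \<in> I) \<and> (\<forall>r. \<forall>x\<in>I. r * x \<in> I)"

definition lgen :: "'a::ring_1 \<Rightarrow> 'a set" where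
  "lgen x = {r * x | r. True}"

definition principal_left_ideal_ring :: "'a::ring_1 itself \<Rightarrow> bool" where
  "principal_left_ideal_ring _ \<longleftrightarrow> (\<forall>I::'a set. left_ideal I \<longrightarrow> (\<exists>x. I = lgen x))"

definition strict_total_order :: "('a \<Rightarrow> 'a \<Rightarrow> bool) \<Rightarrow> bool" where
  "strict_total_order lt \<longleftrightarrow> (\<forall>x. \<not> lt x x) \<and> (\<forall>x y z. lt x y \<longrightarrow> lt y z \<longrightarrow> lt x z)
     \<and> (\<forall>x y. x \<noteq> y \<longrightarrow> lt x y \<or> lt y x)"

definition respectful :: "('a::ring_1 \<Rightarrow> 'a \<Rightarrow> bool) \<Rightarrow> bool" where
  "respectful lt \<longleftrightarrow> strict_total_order lt \<and>
     (\<forall>x y. x \<noteq> 0 \<longrightarrow> y \<noteq> 0 \<longrightarrow> lgen y \<subset> lgen x \<longrightarrow>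
        (\<exists>\<alpha>. is_unit \<alpha> \<and> (\<forall>u. is_unit u \<longrightarrow> lt (\<alpha> * x) (u * y))))"

definition carrier_vec :: "nat \<Rightarrow> (nat \<Rightarrow> 'a::zero) set" where
  "carrier_vec n = {x. \<forall>k\<ge>n. x k = 0}"

definition smult :: "'a::ring_1 \<Rightarrow> (nat \<Rightarrow> 'a) \<Rightarrow> (nat \<Rightarrow> 'a)" where
  "smult r x = (\<lambda>k. r * x k)"

definition vadd :: "(nat \<Rightarrow> 'a::ring_1) \<Rightarrow> (nat \<Rightarrow> 'a) \<Rightarrow> (nat \<Rightarrow> 'a)" where
  "vadd x y = (\<lambda>k. x k + y k)"

definition lincomb :: "nat \<Rightarrow> (nat \<Rightarrow> 'a::ring_1) \<Rightarrow> (nat \<Rightarrow> nat \<Rightarrow> 'a) \<Rightarrow> (nat \<Rightarrow> 'a)" where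
  "lincomb i c B = (\<lambda>k. \<Sum>j<i. c j * B j k)"

definition left_submodule :: "nat \<Rightarrow> (nat \<Rightarrow> 'a::ring_1) set \<Rightarrow> bool" where
  "left_submodule n C \<longleftrightarrow> C \<subseteq> carrier_vec n \<and> (\<lambda>k. 0) \<in> C \<and>
     (\<forall>x\<in>C. \<forall>y\<in>C. vadd x y \<in> C) \<and> (\<forall>r. \<forall>x\<in>C. smult r x \<in> C)"

definition is_ordered_basis :: "nat \<Rightarrow> (nat \<Rightarrow> nat \<Rightarrow> 'a::ring_1) \<Rightarrow> bool" where
  "is_ordered_basis n B \<longleftrightarrow> (\<forall>j<n. B j \<in> carrier_vec n) \<and>
     (\<forall>x\<in>carrier_vec n. \<exists>!c. (\<forall>j\<ge>n. c j = 0) \<and> x = lincomb n c B)"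

definition coord :: "nat \<Rightarrow> (nat \<Rightarrow> nat \<Rightarrow> 'a::ring_1) \<Rightarrow> (nat \<Rightarrow> 'a) \<Rightarrow> nat \<Rightarrow> 'a" where
  "coord n B x = (THE c. (\<forall>j\<ge>n. c j = 0) \<and> x = lincomb n c B)"

definition Vsp :: "(nat \<Rightarrow> nat \<Rightarrow> 'a::ring_1) \<Rightarrow> nat \<Rightarrow> (nat \<Rightarrow> 'a) set" where
  "Vsp B i = {lincomb i c B | c. True}"

definition level :: "(nat \<Rightarrow> nat \<Rightarrow> 'a::ring_1) \<Rightarrow> (nat \<Rightarrow> 'a) \<Rightarrow> nat" where
  "level B x = (LEAST i. x \<in> Vsp B i)"

definition lexless :: "nat \<Rightarrow> ('a::ring_1 \<Rightarrow> 'a \<Rightarrow> bool) \<Rightarrow> (nat \<Rightarrow> nat \<Rightarrow> 'a)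
    \<Rightarrow> (nat \<Rightarrow> 'a) \<Rightarrow> (nat \<Rightarrow> 'a) \<Rightarrow> bool" where
  "lexless n lt B x y \<longleftrightarrow>
     level B x < level B y \<or>
     (level B x = level B y \<and> x \<noteq> y \<and>
       (let k = (GREATEST k. k < n \<and> coord n B x k \<noteq> coord n B y k)
        in lt (coord n B x k) (coord n B y k)))"

definition generator_system :: "'a::ring_1 set \<Rightarrow> bool" where
  "generator_system \<Gamma> \<longleftrightarrow> (\<forall>\<gamma>\<in>\<Gamma>. \<gamma> \<noteq> 0) \<and>
     (\<forall>I. left_ideal I \<longrightarrow> I \<noteq> {0} \<longrightarrow> (\<exists>!\<gamma>. \<gamma> \<in> \<Gamma> \<and> lgen \<gamma> = I))"

definition candidates :: "(nat \<Rightarrow> nat \<Rightarrow> 'a::ring_1) \<Rightarrow> ((nat \<Rightarrow> 'a) \<Rightarrow> bool) \<Rightarrow> 'a set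
    \<Rightarrow> nat \<Rightarrow> (nat \<Rightarrow> 'a) set \<Rightarrow> (nat \<Rightarrow> 'a) set" where
  "candidates B P \<Gamma> i C = {a \<in> Vsp B i - Vsp B (i - 1).
      \<forall>\<gamma>\<in>\<Gamma>. \<forall>c\<in>C. P (vadd (smult \<gamma> a) c)}"

primrec greedy :: "nat \<Rightarrow> ('a::ring_1 \<Rightarrow> 'a \<Rightarrow> bool) \<Rightarrow> (nat \<Rightarrow> nat \<Rightarrow> 'a)
    \<Rightarrow> ((nat \<Rightarrow> 'a) \<Rightarrow> bool) \<Rightarrow> 'a set \<Rightarrow> nat \<Rightarrow> (nat \<Rightarrow> 'a) set" where
  "greedy n lt B P \<Gamma> 0 = {(\<lambda>k. 0)}"
| "greedy n lt B P \<Gamma> (Suc i) =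
    (let C = greedy n lt B P \<Gamma> i; S = candidates B P \<Gamma> (Suc i) C in
     if S = {} then C
     else (let a = (THE a. a \<in> S \<and> (\<forall>b\<in>S. b \<noteq> a \<longrightarrow> lexless n lt B a b))
           in {vadd (smult r a) c | r c. c \<in> C}))"

definition lexicode :: "nat \<Rightarrow> ('a::ring_1 \<Rightarrow> 'a \<Rightarrow> bool) \<Rightarrow> (nat \<Rightarrow> nat \<Rightarrow> 'a)
    \<Rightarrow> ((nat \<Rightarrow> 'a) \<Rightarrow> bool) \<Rightarrow> 'a set \<Rightarrow> (nat \<Rightarrow> 'a) set" where
  "lexicode n lt B P \<Gamma> = greedy n lt B P \<Gamma> n"

definition left_multiplicative :: "nat \<Rightarrow> ((nat \<Rightarrow> 'a::ring_1) \<Rightarrow> bool) \<Rightarrow> bool" where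
  "left_multiplicative n P \<longleftrightarrow>
     (\<forall>u x. is_unit u \<longrightarrow> x \<in> carrier_vec n \<longrightarrow> P (smult u x) = P x)"

end

theory Submission
  imports Defs
begin


lemma ar: "a*b = (c::'a::ring_1) \<Longrightarrow> a*(b*z) = c*z"
  by (simp add: mult.assoc[symmetric])

definition iso :: "'a::ring_1 \<Rightarrow> 'a \<Rightarrow> bool" where
  "iso e f \<longleftrightarrow> (\<exists>x y. f*x = x \<and> x*e = x \<and> e*y = y \<and> y*f = y \<and> y*x = e \<and> x*y = f)"

definition orth :: "'a::ring_1 \<Rightarrow> 'a \<Rightarrow> bool" where
  "orth e h \<longleftrightarrow> e*h = 0 \<and> h*e = 0"

lemma isoE:
  assumes "iso e f"
  obtains x y where "f*x = x" "x*e = x" "e*y = y" "y*f = y" "y*x = e" "x*y = f"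
  using assms iso_def by blast

lemma isoI:
  assumes "f*x = x" "x*e = x" "e*y = y" "y*f = y" "y*x = e" "x*y = f"
  shows "iso e f"
  unfolding iso_def using assms by blast

lemma iso_idem1: "iso e f \<Longrightarrow> e*e = e"
  by (metis isoE ar)
lemma iso_idem2: "iso e f \<Longrightarrow> f*f = f"
  by (metis isoE ar)

lemma iso_sym: "iso e f \<Longrightarrow> iso f e"
  by (metis isoE isoI)

lemma iso_refl: "e*e = e \<Longrightarrow> iso e e"
  by (rule isoI[of e e e]) auto

lemma iso_trans:
  assumes "iso e f" "iso f g" shows "iso e g"
proof -
  obtain x y where a: "f*x = x" "x*e = x" "e*y = y" "y*f = y" "y*x = e" "x*y = f" using assms(1) isoE by blast
  obtain x' y' where b: "g*x' = x'" "x'*f = x'" "f*y' = y'" "y'*g = y'" "y'*x' = f" "x'*y' = g" using assms(2) isoE by blast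
  show ?thesis
    by (rule isoI[of g "x'*x" e "y*y'"]) 
       (simp_all add: mult.assoc a b a[THEN ar] b[THEN ar])
qed

lemma iso_sum:
  assumes "orth e h" "orth f k" "iso e f" "iso h k"
  shows "iso (e+h) (f+k)"
proof -
  obtain x y where a: "f*x = x" "x*e = x" "e*y = y" "y*f = y" "y*x = e" "x*y = f" using assms(3) isoE by blast
  obtain x' y' where b: "k*x' = x'" "x'*h = x'" "h*y' = y'" "y'*k = y'" "y'*x' = h" "x'*y' = k" using assms(4) isoE by blast
  have o: "e*h = 0" "h*e = 0" "f*k = 0" "k*f=0" using assms(1,2) orth_def by auto
  have c: "y*x' = 0" "y'*x = 0" "x*y' = 0" "x'*y = 0" "k*x = 0" "f*x' = 0" "x*h = 0" "x'*e = 0"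
     "h*y = 0" "e*y' = 0" "y*k = 0" "y'*f = 0"
    by (metis a b o ar mult_zero_left mult_zero_right)+
  show ?thesis
    by (rule isoI[of "f+k" "x+x'" "e+h" "y+y'"])
       (simp_all add: distrib_left distrib_right a b c)
qed


lemma pow_periodic:
  fixes p :: "'a::{ring_1,finite}"
  shows "\<exists>i d. d > 0 \<and> p^(i+d) = p^i"
proof -
  have "\<not> inj (\<lambda>n::nat. p^n)"
  proof
    assume "inj (\<lambda>n::nat. p^n)"
    moreover have "finite (range (\<lambda>n::nat. p^n))" by simp
    ultimately have "finite (UNIV::nat set)" using finite_imageD by blast
    thus False by simp
  qed
  then obtain m m' where "m \<noteq> m'" "p^m = p^m'" unfolding inj_def by blast
  then show ?thesis
    by (cases "m < m'") (rule exI[of _ m], rule exI[of _ "m'-m"], simp,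
        rule exI[of _ m'], rule exI[of _ "m-m'"], simp)
qed

lemma pow_per:
  fixes p :: "'a::ring_1"
  assumes "p^(i+d) = p^i"
  shows "p^(i + k + q*d) = p^(i+k)"
proof (induction q)
  case 0 then show ?case by simp
next
  case (Suc q)
  have "p^(i + k + Suc q * d) = p^(i+d) * p^(k + q*d)"
    by (simp add: power_add[symmetric] algebra_simps)
  also have "\<dots> = p^(i + k + q*d)" using assms by (simp add: power_add[symmetric] algebra_simps)
  finally show ?case using Suc by simp
qed

lemma power_idem:
  fixes p :: "'a::{ring_1,finite}"
  shows "\<exists>m\<ge>1. p^m * p^m = p^m"
proof -
  obtain i d where d: "d > 0" "p^(i+d) = p^i" using pow_periodic by blast
  define m where "m = (i+1)*d"
  have "(i+1)*1 \<le> (i+1)*d" using d(1) by (intro mult_le_mono2) simp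
  then have m1: "m \<ge> i + 1" unfolding m_def by (simp only: mult_1_right)
  have "p^m * p^m = p^(i + (m - i) + (i+1)*d)" using m1 by (simp add: power_add[symmetric] m_def)
  also have "\<dots> = p^(i + (m-i))" by (rule pow_per[OF d(2)])
  also have "\<dots> = p^m" using m1 by simp
  finally show ?thesis using m1 by (intro exI[of _ m]) simp
qed

lemma pow_corner:
  fixes p :: "'a::ring_1"
  assumes "e*p = p" "p*e = p"
  shows "e*p^(Suc k) = p^(Suc k)" "p^(Suc k)*e = p^(Suc k)"
proof -
  show "e*p^(Suc k) = p^(Suc k)" using assms(1) by (simp add: mult.assoc[symmetric])
  show "p^(Suc k)*e = p^(Suc k)" using assms(2) by (simp only: power_Suc2 mult.assoc)
qed

definition cinv :: "'a::ring_1 \<Rightarrow> 'a \<Rightarrow> bool" where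
  "cinv e p \<longleftrightarrow> (\<exists>p'. e*p' = p' \<and> p'*e = p' \<and> p'*p = e \<and> p*p' = e)"

lemma local_dich:
  fixes p :: "'a::{ring_1,finite}"
  assumes ee: "e*e = e" and "e*p = p" "p*e = p"
    and loc: "\<forall>q. q*q = q \<and> e*q = q \<and> q*e = q \<longrightarrow> q = 0 \<or> q = e"
  shows "cinv e p \<or> (\<exists>N. p^N = 0)"
proof -
  obtain m where m: "m \<ge> 1" "p^m * p^m = p^m" using power_idem by blast
  obtain k where mk: "m = Suc k" using m(1) by (cases m) auto
  have c: "e*p^m = p^m" "p^m*e = p^m" using pow_corner[OF assms(2,3)] mk by auto
  from loc m(2) c have "p^m = 0 \<or> p^m = e" by blast
  then show ?thesis
  proof
    assume "p^m = 0" then show ?thesis by blast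
  next
    assume pe: "p^m = e"
    have "cinv e p" unfolding cinv_def
    proof (rule exI[of _ "e*p^k*e"], intro conjI)
      show "e * (e * p ^ k * e) = e * p ^ k * e" using ee by (simp add: mult.assoc[symmetric])
      show "e * p ^ k * e * e = e * p ^ k * e" using ee by (simp add: mult.assoc)
      show "e * p ^ k * e * p = e" using pe mk assms(2) ee
        by (metis assms(3) mult.assoc power_Suc2)
      show "p * (e * p ^ k * e) = e" using pe mk assms(2) ee
        by (metis assms(3) mult.assoc power_Suc)
    qed
    then show ?thesis by blast
  qed
qed

lemma geom_l:
  fixes c :: "'a::ring_1"
  shows "(1 - c) * (\<Sum>i<N. c^i) = 1 - c^N"
proof (induction N)
  case 0 then show ?case by simp
next
  case (Suc N)
  have "(1 - c) * (\<Sum>i<Suc N. c^i) = (1 - c) * (\<Sum>i<N. c^i) + (1-c)*c^N"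
    by (simp add: distrib_left)
  also have "\<dots> = 1 - c^Suc N" using Suc by (simp add: algebra_simps)
  finally show ?case .
qed

lemma geom_r:
  fixes c :: "'a::ring_1"
  shows "(\<Sum>i<N. c^i) * (1 - c) = 1 - c^N"
proof (induction N)
  case 0 then show ?case by simp
next
  case (Suc N)
  have "(\<Sum>i<Suc N. c^i) * (1 - c) = (\<Sum>i<N. c^i) * (1 - c) + c^N * (1-c)"
    by (simp add: distrib_right)
  also have "\<dots> = 1 - c^Suc N" using Suc by (simp add: algebra_simps power_Suc2 power_commutes)
  finally show ?case .
qed

lemma e_comm_pow:
  fixes c :: "'a::ring_1"
  assumes "e*c = c" "c*e = c"
  shows "e*c^i = c^i*e"
proof (induction i)
  case 0 then show ?case by simp
next
  case (Suc i)
  have "e*c^Suc i = c * c^i" using assms(1) by (simp add: mult.assoc[symmetric])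
  also have "c^Suc i * e = c * (e * c^i)" using Suc by (simp add: mult.assoc)
  ultimately show ?case using assms(2) by (simp add: mult.assoc[symmetric])
qed

lemma nil_inv:
  fixes c :: "'a::ring_1"
  assumes ee: "e*e = e" and ec: "e*c = c" "c*e = c" and N: "c^N = 0"
  shows "cinv e (e - c)"
proof -
  define S where "S = (\<Sum>i<N. c^i)"
  have eS: "e*S = S*e" unfolding S_def
    by (simp add: sum_distrib_left sum_distrib_right e_comm_pow[OF ec])
  have l: "(1-c)*S = 1" "S*(1-c) = 1" unfolding S_def using geom_l geom_r N by (metis diff_zero)+
  have d1: "e - c = e*(1-c)" using ec by (simp add: algebra_simps)
  have d2: "e - c = (1-c)*e" using ec by (simp add: algebra_simps)
  show ?thesis unfolding cinv_def
  proof (rule exI[of _ "e*S"], intro conjI)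
    show "e*(e*S) = e*S" using ee by (simp add: mult.assoc[symmetric])
    have "e*S*e = e*(e*S)" by (simp only: mult.assoc eS[symmetric])
    then show "e*S*e = e*S" using ee by (simp add: mult.assoc[symmetric])
    have "e*S*(e-c) = e*(S*(1-c))*e" by (simp only: d2 mult.assoc)
    then show "e*S*(e-c) = e" using l ee by simp
    have "(e-c)*(e*S) = (e-c)*e*S" by (simp only: mult.assoc)
    also have "(e-c)*e = e - c" using ec ee by (simp add: algebra_simps)
    also have "(e-c)*S = e*((1-c)*S)" by (simp only: d1 mult.assoc)
    finally show "(e-c)*(e*S) = e" using l by simp
  qed
qed

lemma sub_iso_eq:
  fixes q :: "'a::{ring_1,finite}"
  assumes "f*q = q" "q*f = q" "iso q f"
  shows "q = f"
proof -
  obtain x y where a: "f*x = x" "x*q = x" "q*y = y" "y*f = y" "y*x = q" "x*y = f"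
    using assms(3) isoE by blast
  have sub: "{r. q*r = r} \<subseteq> {r. f*r = r}"
  proof
    fix r assume "r \<in> {r. q*r = r}"
    then have r: "q*r = r" by simp
    have "f*r = (f*q)*r" using r by (simp add: mult.assoc)
    then show "r \<in> {r. f*r = r}" using assms(1) r by simp
  qed
  have inj: "inj_on (\<lambda>r. y*r) {r. f*r = r}"
  proof (rule inj_onI)
    fix r r' assume "r \<in> {r. f*r = r}" "r' \<in> {r. f*r = r}" "y*r = y*r'"
    then have "(x*y)*r = (x*y)*r'" by (simp add: mult.assoc)
    then show "r = r'" using a(6) \<open>r \<in> _\<close> \<open>r' \<in> _\<close> by simp
  qed
  have img: "(\<lambda>r. y*r) ` {r. f*r = r} \<subseteq> {r. q*r = r}" using a(3) by (auto simp: mult.assoc[symmetric])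
  have "card {r. f*r = r} \<le> card {r. q*r = r}"
    using card_inj_on_le[OF inj img] by simp
  moreover have "card {r. q*r = r} \<le> card {r. f*r = r}" by (rule card_mono) (simp_all add: sub)
  ultimately have "{r. q*r = r} = {r. f*r = r}" using sub by (intro card_subset_eq) auto
  moreover have "f \<in> {r. f*r = r}" using iso_idem2[OF assms(3)] by simp
  ultimately have "q*f = f" by blast
  then show ?thesis using assms(2) by simp
qed




lemma schur:
  fixes x y z :: "'a::ring_1"
  assumes ee: "e*e = e" and hh: "h*h = h" and ff: "f*f = f" and kk: "k*k = k"
    and o1: "orth e h" and o2: "orth f k"
    and x1: "(f+k)*x = x" and x2: "x*(e+h) = x" and y1: "(e+h)*y = y" and y2: "y*(f+k) = y"
    and yx: "y*x = e+h" and xy: "x*y = f+k"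
    and z1: "e*z = z" and z2: "z*f = z" and zA: "z*(f*x*e) = e" and Az: "(f*x*e)*z = f"
  shows "iso h k"
proof -
  have eh: "e*h = 0" "h*e = 0" and fk: "f*k = 0" "k*f = 0" using o1 o2 orth_def by auto
  have zA': "z*(f*(x*(e*w))) = e*w" for w using zA by (simp add: mult.assoc[symmetric])
  have Az': "f*(x*(e*(z*w))) = f*w" for w using Az by (simp add: mult.assoc[symmetric])
  have R: "e*(e*w) = e*w" "h*(h*w) = h*w" "f*(f*w) = f*w" "k*(k*w) = k*w"
          "e*(h*w) = 0" "h*(e*w) = 0" "f*(k*w) = 0" "k*(f*w) = 0" for w
    using ee hh ff kk eh fk by (simp_all add: mult.assoc[symmetric])
  define D where "D = k*x*h - k*x*e*z*f*x*h"
  define Y where "Y = h*y*k"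
  have hy: "h*y = y - e*y" using y1 by (simp add: algebra_simps)
  have yk: "y*k = y - y*f" using y2 by (simp add: algebra_simps)
  have xhyk: "x*(h*(y*k)) = k - x*(e*(y*k))"
  proof -
    have hy': "h*(y*w) = y*w - e*(y*w)" for w using hy by (simp add: mult.assoc[symmetric] left_diff_distrib)
    have "x*(h*(y*k)) = x*(y*k) - x*(e*(y*k))" by (simp add: hy' right_diff_distrib)
    moreover have "x*(y*k) = k" using xy fk kk by (simp add: mult.assoc[symmetric] distrib_right)
    ultimately show ?thesis by simp
  qed
  have hykx: "h*(y*(k*x)) = h - h*(y*(f*x))"
  proof -
    have "h*(y*(k*x)) = h*(y*x) - h*(y*(f*x))" by (simp only: yk mult.assoc[symmetric] right_diff_distrib left_diff_distrib)
    then show ?thesis using yx eh hh by (simp add: algebra_simps)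
  qed
  show ?thesis
  proof (rule isoI[of k D h Y])
    show "k*D = D" unfolding D_def by (simp add: right_diff_distrib mult.assoc R)
    show "D*h = D" unfolding D_def using hh by (simp add: left_diff_distrib mult.assoc)
    show "h*Y = Y" unfolding Y_def by (simp add: mult.assoc R)
    show "Y*k = Y" unfolding Y_def using kk by (simp add: mult.assoc)
    have "D*Y = k*(x*(h*(y*k))) - k*(x*(e*(z*(f*(x*(h*(y*k)))))))"
      unfolding D_def Y_def by (simp add: left_diff_distrib mult.assoc R)
    also have "\<dots> = k*(k - x*(e*(y*k))) - k*(x*(e*(z*(f*(k - x*(e*(y*k)))))))" by (simp only: xhyk)
    also have "\<dots> = k" by (simp add: right_diff_distrib R zA' kk fk)
    finally show "D*Y = k" .
    have "Y*D = h*(y*(k*x))*h - h*(y*(k*x))*(e*(z*(f*(x*h))))"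
      unfolding D_def Y_def by (simp add: right_diff_distrib mult.assoc R)
    also have "\<dots> = (h - h*(y*(f*x)))*h - (h - h*(y*(f*x)))*(e*(z*(f*(x*h))))" by (simp only: hykx)
    also have "\<dots> = h" by (simp add: left_diff_distrib mult.assoc R Az' hh eh)
    finally show "Y*D = h" .
  qed
qed


lemma iso_sub:
  assumes a: "f*s = s" "s*e = s" "e*t = t" "t*f = t" "t*s = e" "s*t = f"
    and "g*g = g" "e*g = g" "g*e = g"
  shows "iso g (s*g*t)" "f*(s*g*t) = s*g*t" "(s*g*t)*f = s*g*t"
proof -
  have a': "f*(s*w) = s*w" "s*(e*w) = s*w" "e*(t*w) = t*w" "t*(f*w) = t*w" "t*(s*w) = e*w" "s*(t*w) = f*w" for w
    using a by (simp_all add: mult.assoc[symmetric])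
  have g': "g*(g*w) = g*w" "e*(g*w) = g*w" "g*(e*w) = g*w" for w using assms(7-9) by (simp_all add: mult.assoc[symmetric])
  show "iso g (s*g*t)"
    by (rule isoI[of "s*g*t" "s*g" g "g*t"]) (simp_all add: mult.assoc a a' g' assms)
  show "f*(s*g*t) = s*g*t" "(s*g*t)*f = s*g*t" using a a' by (simp_all add: mult.assoc)
qed

lemma orth_sub: "e*g = g \<Longrightarrow> g*e = g \<Longrightarrow> orth e h \<Longrightarrow> orth g h"
  unfolding orth_def by (metis mult.assoc mult_zero_left mult_zero_right)

lemma orth_sym: "orth e h \<Longrightarrow> orth h e" unfolding orth_def by simp

lemma orth_add: "orth a b \<Longrightarrow> orth a c \<Longrightarrow> orth a (b+c)"
  unfolding orth_def by (simp add: distrib_left distrib_right)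

lemma idem_add: "a*a = a \<Longrightarrow> b*b = b \<Longrightarrow> orth a b \<Longrightarrow> (a+b)*(a+b) = (a+b)"
  unfolding orth_def by (simp add: distrib_left distrib_right)

lemma card_corner_less:
  fixes e :: "'a::{ring_1,finite}"
  assumes "e*e = e" "e*g = g" "g*e = g" "g \<noteq> e"
  shows "card {r. g*r = r} < card {r. e*r = r}"
proof (rule psubset_card_mono)
  show "finite {r. e*r = r}" by simp
  have "{r. g*r = r} \<subseteq> {r. e*r = r}"
  proof
    fix r assume "r \<in> {r. g*r = r}"
    then have r: "g*r = r" by simp
    have "e*r = (e*g)*r" using r by (simp add: mult.assoc)
    then show "r \<in> {r. e*r = r}" using assms(2) r by simp
  qed
  moreover have "e \<in> {r. e*r = r}" "e \<notin> {r. g*r = r}" using assms by auto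
  ultimately show "{r. g*r = r} \<subset> {r. e*r = r}" by blast
qed



lemma cancel:
  fixes e :: "'a::{ring_1,finite}"
  shows "e*e = e \<Longrightarrow> h*h = h \<Longrightarrow> f*f = f \<Longrightarrow> k*k = k \<Longrightarrow> orth e h \<Longrightarrow> orth f k \<Longrightarrow>
         iso e f \<Longrightarrow> iso (e+h) (f+k) \<Longrightarrow> iso h k"
proof (induction "card {r. e*r = r}" arbitrary: e h f k rule: less_induct)
  case less
  note ee = less.prems(1) and hh = less.prems(2) and ff = less.prems(3) and kk = less.prems(4)
    and oeh = less.prems(5) and ofk = less.prems(6) and ief = less.prems(7) and ibig = less.prems(8)
  have eh: "e*h = 0" "h*e = 0" and fk: "f*k = 0" "k*f = 0" using oeh ofk orth_def by auto
  show ?case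
  proof (cases "\<exists>e1. e1*e1 = e1 \<and> e*e1 = e1 \<and> e1*e = e1 \<and> e1 \<noteq> 0 \<and> e1 \<noteq> e")
    case True
    then obtain e1 where e1: "e1*e1 = e1" "e*e1 = e1" "e1*e = e1" "e1 \<noteq> 0" "e1 \<noteq> e" by blast
    define e2 where "e2 = e - e1"
    have e2: "e2*e2 = e2" "e*e2 = e2" "e2*e = e2" "e2 \<noteq> e"
      unfolding e2_def using e1 ee by (simp_all add: algebra_simps)
    have o12: "orth e1 e2" unfolding orth_def e2_def using e1 ee by (simp add: algebra_simps)
    obtain s t where a: "f*s = s" "s*e = s" "e*t = t" "t*f = t" "t*s = e" "s*t = f"
      using ief isoE by blast
    define f1 where "f1 = s*e1*t"
    define f2 where "f2 = s*e2*t"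
    note I1 = iso_sub[OF a e1(1-3), folded f1_def]
    note I2 = iso_sub[OF a e2(1-3), folded f2_def]
    have f2eq: "f2 = f - f1" unfolding f2_def f1_def e2_def using a
      by (simp add: algebra_simps)
    have f1i: "f1*f1 = f1" using iso_idem2[OF I1(1)] .
    have f2i: "f2*f2 = f2" using iso_idem2[OF I2(1)] .
    have o1h: "orth e1 h" using orth_sub[OF e1(2,3) oeh] .
    have o2h: "orth e2 h" using orth_sub[OF e2(2,3) oeh] .
    have o1k: "orth f1 k" using orth_sub[OF I1(2,3) ofk] .
    have o2k: "orth f2 k" using orth_sub[OF I2(2,3) ofk] .
    have of12: "orth f1 f2" unfolding f2eq orth_def using I1(2,3) f1i by (simp add: algebra_simps)
    have s1: "e1 + (e2 + h) = e + h" unfolding e2_def by simp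
    have s2: "f1 + (f2 + k) = f + k" unfolding f2eq by simp
    have ih1: "iso (e2+h) (f2+k)"
    proof (rule less.hyps[of e1 "e2+h" f1 "f2+k"])
      show "card {r. e1*r = r} < card {r. e*r = r}" using card_corner_less[OF ee e1(2,3,5)] .
      show "(e2+h)*(e2+h) = e2+h" using idem_add[OF e2(1) hh o2h] .
      show "(f2+k)*(f2+k) = f2+k" using idem_add[OF f2i kk o2k] .
      show "orth e1 (e2+h)" using orth_add[OF o12 o1h] .
      show "orth f1 (f2+k)" using orth_add[OF of12 o1k] .
      show "iso (e1 + (e2 + h)) (f1 + (f2 + k))" unfolding s1 s2 using ibig .
    qed (use e1 f1i I1 in auto)
    show ?thesis
    proof (rule less.hyps[of e2 h f2 k])
      show "card {r. e2*r = r} < card {r. e*r = r}" using card_corner_less[OF ee e2(2,3,4)] .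
    qed (use e2 f2i I2 hh kk o2h o2k ih1 in auto)
  next
    case False
    then have loc: "\<forall>q. q*q = q \<and> e*q = q \<and> q*e = q \<longrightarrow> q = 0 \<or> q = e" by blast
    obtain x y where b: "(f+k)*x = x" "x*(e+h) = x" "(e+h)*y = y" "y*(f+k) = y" "y*x = e+h" "x*y = f+k"
      using ibig isoE by blast
    have b': "(f+k)*(x*w) = x*w" "x*((e+h)*w) = x*w" "(e+h)*(y*w) = y*w" "y*((f+k)*w) = y*w"
       "y*(x*w) = (e+h)*w" "x*(y*w) = (f+k)*w" for w using b by (simp_all add: mult.assoc[symmetric])
    have R: "e*(e*w) = e*w" "h*(h*w) = h*w" "f*(f*w) = f*w" "k*(k*w) = k*w"
          "e*(h*w) = 0" "h*(e*w) = 0" "f*(k*w) = 0" "k*(f*w) = 0" for w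
      using ee hh ff kk eh fk by (simp_all add: mult.assoc[symmetric])
    define c where "c = e*y*f*x*e"
    define d where "d = e*y*k*x*e"
    have cd: "c + d = e"
    proof -
      have "c + d = e*(y*((f+k)*(x*e)))" unfolding c_def d_def by (simp add: algebra_simps)
      also have "\<dots> = e*((e+h)*e)" using b' by simp
      finally show ?thesis using R ee eh by (simp add: algebra_simps)
    qed
    have ce: "e*c = c" "c*e = c" unfolding c_def using R ee by (simp_all add: mult.assoc)
    have de: "e*d = d" "d*e = d" unfolding d_def using R ee by (simp_all add: mult.assoc)
    show ?thesis
    proof (cases "cinv e c")
      case True
      then obtain c' where c': "e*c' = c'" "c'*e = c'" "c'*c = e" "c*c' = e" unfolding cinv_def by blast
      define z where "z = c'*e*y*f"
      define A where "A = f*x*e"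
      have zA: "z*A = e" unfolding z_def A_def using c'(3) ff unfolding c_def
        by (simp add: mult.assoc R)
      have z1: "e*z = z" "z*f = z" unfolding z_def using c' ff
        by (simp add: mult.assoc[symmetric], simp add: mult.assoc)
      have A1: "f*A = A" "A*e = A" unfolding A_def using ff ee
        by (simp add: mult.assoc[symmetric], simp add: mult.assoc)
      define q where "q = A*z"
      have ieq: "iso e q"
      proof (rule isoI[of q A e z])
        show "q*A = A" unfolding q_def using zA A1 by (simp add: mult.assoc)
        show "z*q = z" unfolding q_def using zA z1 by (simp add: mult.assoc[symmetric])
      qed (use A1 z1 zA q_def in auto)
      have "iso q f" using iso_trans[OF iso_sym[OF ieq] ief] .
      moreover have "f*q = q" "q*f = q" unfolding q_def using A1 z1
        by (simp add: mult.assoc[symmetric], simp add: mult.assoc)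
      ultimately have qf: "q = f" using sub_iso_eq by blast
      show ?thesis
        by (rule schur[OF ee hh ff kk oeh ofk b z1, folded A_def, OF zA qf[unfolded q_def]])
    next
      case False
      obtain N where "c^N = 0" using local_dich[OF ee ce loc] False by blast
      then have "cinv e (e - c)" using nil_inv[OF ee ce] by blast
      moreover have "e - c = d" using cd by (simp add: algebra_simps)
      ultimately obtain d' where d': "e*d' = d'" "d'*e = d'" "d'*d = e" "d*d' = e" unfolding cinv_def by blast
      define z where "z = d'*e*y*k"
      define A where "A = k*x*e"
      have zA: "z*A = e" unfolding z_def A_def using d'(3) kk unfolding d_def
        by (simp add: mult.assoc R)
      have z1: "e*z = z" "z*k = z" unfolding z_def using d' kk
        by (simp add: mult.assoc[symmetric], simp add: mult.assoc)
      have A1: "k*A = A" "A*e = A" unfolding A_def using kk ee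
        by (simp add: mult.assoc[symmetric], simp add: mult.assoc)
      define k1 where "k1 = A*z"
      have iek1: "iso e k1"
      proof (rule isoI[of k1 A e z])
        show "k1*A = A" unfolding k1_def using zA A1 by (simp add: mult.assoc)
        show "z*k1 = z" unfolding k1_def using zA z1 by (simp add: mult.assoc[symmetric])
      qed (use A1 z1 zA k1_def in auto)
      have k1i: "k1*k1 = k1" using iso_idem2[OF iek1] .
      have k1k: "k*k1 = k1" "k1*k = k1" unfolding k1_def using A1 z1
        by (simp add: mult.assoc[symmetric], simp add: mult.assoc)
      define k' where "k' = f + (k - k1)"
      have ofk1: "orth f (k - k1)" unfolding orth_def using fk k1k
        by (metis (no_types, lifting) diff_self left_diff_distrib mult.assoc mult_zero_left right_diff_distrib)
      have ok1: "orth k1 (k - k1)" unfolding orth_def using k1k k1i by (simp add: algebra_simps)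
      have kki: "(k-k1)*(k-k1) = k - k1" using k1k k1i kk by (simp add: algebra_simps)
      have ok1f: "orth k1 f" unfolding orth_def using fk k1k by (metis mult.assoc mult_zero_left mult_zero_right)
      have ok1k': "orth k1 k'" unfolding k'_def using orth_add[OF ok1f ok1] .
      have k'i: "k'*k' = k'" unfolding k'_def using idem_add[OF ff kki ofk1] .
      have sk: "k1 + k' = f + k" unfolding k'_def by simp
      have k1xe: "k1*x*e = A"
      proof -
        have "k1*x*e = A*(d'*(e*y*k*x*e))" unfolding k1_def z_def A_def by (simp add: mult.assoc)
        also have "\<dots> = A" using d'(3) A1 unfolding d_def[symmetric] by simp
        finally show ?thesis .
      qed
      have zk1: "z*k1 = z" unfolding k1_def using zA z1 by (simp add: mult.assoc[symmetric])
      have ihk': "iso h k'"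
        by (rule schur[OF ee hh k1i k'i oeh ok1k' b[folded sk] z1(1) zk1]) (simp_all add: k1xe zA, simp add: k1_def)
      have "iso k' (k1 + (k - k1))" unfolding k'_def
        by (rule iso_sum[OF ofk1 ok1 iso_trans[OF iso_sym[OF ief] iek1] iso_refl[OF kki]])
      then show ?thesis using iso_trans[OF ihk'] by simp
    qed
  qed
qed



lemma pow_fix: "p*b = (b::'a::ring_1) \<Longrightarrow> p^k*b = b"
  by (induction k) (simp_all add: mult.assoc)

lemma assoc_unit:
  fixes a b :: "'a::{ring_1,finite}"
  assumes ab: "a = s*b" and ba: "b = t*a"
  shows "\<exists>u. is_unit u \<and> a = u*b"
proof -
  define p where "p = t*s"
  have pb: "p*b = b" unfolding p_def using ab ba by (simp add: mult.assoc)
  obtain m where m: "m \<ge> 1" "p^m * p^m = p^m" using power_idem by blast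
  obtain j where mj: "m = Suc j" using m(1) by (cases m) auto
  define e where "e = p^m"
  have ee: "e*e = e" unfolding e_def using m(2) .
  have eb: "e*b = b" unfolding e_def using pow_fix[OF pb] .
  have ep: "e*p = p*e" unfolding e_def by (simp add: power_commutes)
  define s1 where "s1 = s*e"
  define t1 where "t1 = e*p^j*e*t"
  have t1s1: "t1*s1 = e"
  proof -
    have "t1*s1 = e*p^j*(e*p)*e" unfolding t1_def s1_def p_def by (simp add: mult.assoc)
    also have "\<dots> = e*(p^j*p)*(e*e)" unfolding ep by (simp add: mult.assoc)
    also have "p^j*p = e" unfolding e_def mj by (simp add: power_Suc2 power_commutes)
    finally show ?thesis using ee by simp
  qed
  have s1e: "s1*e = s1" unfolding s1_def using ee by (simp add: mult.assoc)
  have et1: "e*t1 = t1" unfolding t1_def using ee by (simp add: mult.assoc[symmetric])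
  have s1b: "s1*b = a" unfolding s1_def using eb ab by (simp add: mult.assoc)
  have t1a: "t1*a = b" unfolding t1_def using eb ba pow_fix[OF pb] by (simp add: mult.assoc)
  define f where "f = s1*t1"
  have ief: "iso e f"
  proof (rule isoI[of f s1 e t1])
    show "f*s1 = s1" unfolding f_def using t1s1 s1e by (simp add: mult.assoc)
    show "t1*f = t1" unfolding f_def using t1s1 et1 by (simp add: mult.assoc[symmetric])
  qed (use s1e et1 t1s1 f_def in auto)
  have ff: "f*f = f" using iso_idem2[OF ief] .
  have "iso (1-e) (1-f)"
  proof (rule cancel[OF ee _ ff _ _ _ ief])
    show "(1-e)*(1-e) = 1-e" using ee by (simp add: algebra_simps)
    show "(1-f)*(1-f) = 1-f" using ff by (simp add: algebra_simps)
    show "orth e (1-e)" unfolding orth_def using ee by (simp add: algebra_simps)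
    show "orth f (1-f)" unfolding orth_def using ff by (simp add: algebra_simps)
    show "iso (e + (1-e)) (f + (1-f))" using iso_refl[of 1] by simp
  qed
  then obtain x2 y2 where c: "(1-f)*x2 = x2" "x2*(1-e) = x2" "(1-e)*y2 = y2" "y2*(1-f) = y2"
     "y2*x2 = 1-e" "x2*y2 = 1-f" using isoE by blast
  have fs1: "f*s1 = s1" "t1*f = t1" using ief isoE[of e f]
    unfolding f_def using t1s1 s1e et1 by (simp_all add: mult.assoc, simp add: mult.assoc[symmetric])
  have z1: "t1*x2 = 0"
  proof -
    have "t1*x2 = t1*((1-f)*x2)" using c(1) by simp
    also have "\<dots> = (t1 - t1*f)*x2" by (simp add: algebra_simps)
    finally show ?thesis using fs1 by simp
  qed
  have z2: "y2*s1 = 0"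
  proof -
    have "y2*s1 = (y2*(1-f))*s1" using c(4) by simp
    also have "\<dots> = y2*(s1 - f*s1)" by (simp add: algebra_simps)
    finally show ?thesis using fs1 by simp
  qed
  have z3: "s1*y2 = 0"
  proof -
    have "s1*y2 = s1*((1-e)*y2)" using c(3) by simp
    also have "\<dots> = (s1 - s1*e)*y2" by (simp add: algebra_simps)
    finally show ?thesis using s1e by simp
  qed
  have z4: "x2*t1 = 0"
  proof -
    have "x2*t1 = (x2*(1-e))*t1" using c(2) by simp
    also have "\<dots> = x2*(t1 - e*t1)" by (simp add: algebra_simps)
    finally show ?thesis using et1 by simp
  qed
  have z5: "x2*b = 0"
  proof -
    have "x2*b = (x2*(1-e))*b" using c(2) by simp
    also have "\<dots> = x2*(b - e*b)" by (simp add: algebra_simps)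
    finally show ?thesis using eb by simp
  qed
  show ?thesis
  proof (intro exI conjI)
    show "is_unit (s1 + x2)" unfolding is_unit_def
    proof (rule exI[of _ "t1 + y2"])
      show "(s1 + x2) * (t1 + y2) = 1 \<and> (t1 + y2) * (s1 + x2) = 1"
        using z1 z2 z3 z4 c t1s1 by (simp add: algebra_simps f_def)
    qed
    show "a = (s1 + x2)*b" using s1b z5 by (simp add: distrib_right)
  qed
qed



lemma lincomb_carrier:
  assumes "\<forall>j<n. B j \<in> carrier_vec n" "i \<le> n"
  shows "lincomb i c B \<in> carrier_vec n"
  using assms unfolding carrier_vec_def lincomb_def by auto

lemma lincomb_ext: "(\<forall>j<i. c j = c' j) \<Longrightarrow> lincomb i c B = lincomb i c' B"
  unfolding lincomb_def by (intro ext sum.cong) auto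

lemma lincomb_extend: "(\<forall>j. i \<le> j \<longrightarrow> c j = 0) \<Longrightarrow> lincomb (i+d) c B = lincomb i c B"
proof (induction d)
  case 0 then show ?case by simp
next
  case (Suc d)
  then show ?case unfolding lincomb_def by (simp add: fun_eq_iff)
qed

lemma lincomb_extend': "(\<forall>j. i \<le> j \<longrightarrow> c j = 0) \<Longrightarrow> i \<le> m \<Longrightarrow> lincomb m c B = lincomb i c B"
  using lincomb_extend[of i c "m - i" B] by simp

lemma lincomb_add: "lincomb i (\<lambda>j. c j + c' j) B = vadd (lincomb i c B) (lincomb i c' B)"
  unfolding lincomb_def vadd_def by (simp add: fun_eq_iff distrib_right sum.distrib)

lemma lincomb_smult: "lincomb i (\<lambda>j. r * c j) B = smult r (lincomb i c B)"
  unfolding lincomb_def smult_def by (simp add: fun_eq_iff sum_distrib_left mult.assoc)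

lemma coord_spec:
  assumes "is_ordered_basis n B" "x \<in> carrier_vec n"
  shows "(\<forall>j\<ge>n. coord n B x j = 0) \<and> x = lincomb n (coord n B x) B"
proof -
  have "\<exists>!c. (\<forall>j\<ge>n. c j = 0) \<and> x = lincomb n c B" using assms unfolding is_ordered_basis_def by blast
  then show ?thesis unfolding coord_def by (rule theI')
qed

lemma coord_unique:
  assumes "is_ordered_basis n B" "x \<in> carrier_vec n" "\<forall>j\<ge>n. c j = 0" "x = lincomb n c B"
  shows "coord n B x = c"
proof -
  have "\<exists>!c. (\<forall>j\<ge>n. c j = 0) \<and> x = lincomb n c B" using assms unfolding is_ordered_basis_def by blast
  then show ?thesis unfolding coord_def using assms(3,4) by (intro the1_equality) auto
qed

lemma carrier_vadd: "x \<in> carrier_vec n \<Longrightarrow> y \<in> carrier_vec n \<Longrightarrow> vadd x y \<in> carrier_vec n"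
  unfolding carrier_vec_def vadd_def by auto

lemma carrier_smult: "x \<in> carrier_vec n \<Longrightarrow> smult r x \<in> carrier_vec n"
  unfolding carrier_vec_def smult_def by auto

lemma coord_vadd:
  assumes "is_ordered_basis n B" "x \<in> carrier_vec n" "y \<in> carrier_vec n"
  shows "coord n B (vadd x y) = (\<lambda>j. coord n B x j + coord n B y j)"
proof (rule coord_unique[OF assms(1) carrier_vadd[OF assms(2,3)]])
  show "\<forall>j\<ge>n. coord n B x j + coord n B y j = 0" using coord_spec[OF assms(1,2)] coord_spec[OF assms(1,3)] by simp
  show "vadd x y = lincomb n (\<lambda>j. coord n B x j + coord n B y j) B"
    unfolding lincomb_add using coord_spec[OF assms(1,2)] coord_spec[OF assms(1,3)] by simp
qed

lemma coord_smult:
  assumes "is_ordered_basis n B" "x \<in> carrier_vec n"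
  shows "coord n B (smult r x) = (\<lambda>j. r * coord n B x j)"
proof (rule coord_unique[OF assms(1) carrier_smult[OF assms(2)]])
  show "\<forall>j\<ge>n. r * coord n B x j = 0" using coord_spec[OF assms(1,2)] by simp
  show "smult r x = lincomb n (\<lambda>j. r * coord n B x j) B"
    unfolding lincomb_smult using coord_spec[OF assms(1,2)] by simp
qed

lemma coord_inj:
  assumes "is_ordered_basis n B" "x \<in> carrier_vec n" "y \<in> carrier_vec n" "coord n B x = coord n B y"
  shows "x = y"
  using coord_spec[OF assms(1,2)] coord_spec[OF assms(1,3)] assms(4) by metis

lemma Vsp_char:
  assumes "is_ordered_basis n B" "i \<le> n"
  shows "x \<in> Vsp B i \<longleftrightarrow> x \<in> carrier_vec n \<and> (\<forall>j. i \<le> j \<longrightarrow> coord n B x j = 0)"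
proof
  assume "x \<in> Vsp B i"
  then obtain c where c: "x = lincomb i c B" unfolding Vsp_def by blast
  define c' where "c' = (\<lambda>j. if j < i then c j else 0)"
  have x1: "x = lincomb i c' B" unfolding c c'_def by (rule lincomb_ext) simp
  have x2: "x = lincomb n c' B" unfolding x1 using assms(2) by (intro lincomb_extend'[symmetric]) (auto simp: c'_def)
  have car: "x \<in> carrier_vec n" unfolding x1 using assms unfolding is_ordered_basis_def
    by (intro lincomb_carrier) auto
  have "coord n B x = c'" using assms(2) by (intro coord_unique[OF assms(1) car _ x2]) (auto simp: c'_def)
  then show "x \<in> carrier_vec n \<and> (\<forall>j. i \<le> j \<longrightarrow> coord n B x j = 0)" using car by (auto simp: c'_def)
next
  assume h: "x \<in> carrier_vec n \<and> (\<forall>j. i \<le> j \<longrightarrow> coord n B x j = 0)"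
  then have "x = lincomb n (coord n B x) B" using coord_spec[OF assms(1)] by blast
  also have "\<dots> = lincomb i (coord n B x) B" using h assms(2) by (intro lincomb_extend') auto
  finally show "x \<in> Vsp B i" unfolding Vsp_def by blast
qed

lemma carrier_finite:
  shows "finite (carrier_vec n :: (nat \<Rightarrow> 'a::{zero,finite}) set)"
proof -
  have "carrier_vec n \<subseteq> (\<lambda>xs. \<lambda>k. if k < n then xs ! k else 0) ` {xs. set xs \<subseteq> (UNIV::'a set) \<and> length xs = n}"
  proof
    fix x :: "nat \<Rightarrow> 'a" assume "x \<in> carrier_vec n"
    then have "x = (\<lambda>k. if k < n then map x [0..<n] ! k else 0)" unfolding carrier_vec_def by auto
    then show "x \<in> (\<lambda>xs. \<lambda>k. if k < n then xs ! k else 0) ` {xs. set xs \<subseteq> UNIV \<and> length xs = n}"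
      by (intro image_eqI[of _ _ "map x [0..<n]"]) auto
  qed
  moreover have "finite {xs. set xs \<subseteq> (UNIV::'a set) \<and> length xs = n}"
    by (rule finite_lists_length_eq) simp
  ultimately show ?thesis by (meson finite_surj)
qed



definition topd :: "nat \<Rightarrow> (nat \<Rightarrow> nat \<Rightarrow> 'a::ring_1) \<Rightarrow> (nat \<Rightarrow> 'a) \<Rightarrow> (nat \<Rightarrow> 'a) \<Rightarrow> nat" where
  "topd n B x y = (GREATEST k. k < n \<and> coord n B x k \<noteq> coord n B y k)"

lemma top_char:
  assumes "k0 < n" "coord n B x k0 \<noteq> coord n B y k0"
    "\<forall>k. k0 < k \<longrightarrow> k < n \<longrightarrow> coord n B x k = coord n B y k"
  shows "topd n B x y = k0"
  unfolding topd_def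
proof (rule Greatest_equality)
  show "k0 < n \<and> coord n B x k0 \<noteq> coord n B y k0" using assms by simp
  fix k assume "k < n \<and> coord n B x k \<noteq> coord n B y k"
  then show "k \<le> k0" using assms(3) by (meson not_le)
qed

lemma top_ex:
  assumes "is_ordered_basis n B" "x \<in> carrier_vec n" "y \<in> carrier_vec n" "x \<noteq> y"
  shows "\<exists>k0. k0 < n \<and> coord n B x k0 \<noteq> coord n B y k0 \<and>
    (\<forall>k. k0 < k \<longrightarrow> k < n \<longrightarrow> coord n B x k = coord n B y k)"
proof -
  have "coord n B x \<noteq> coord n B y" using coord_inj[OF assms(1-3)] assms(4) by blast
  then obtain j where j: "coord n B x j \<noteq> coord n B y j" by blast
  have "\<not> n \<le> j" using j coord_spec[OF assms(1,2)] coord_spec[OF assms(1,3)] by auto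
  then have jn: "j < n" by simp
  define P where "P = (\<lambda>k. k < n \<and> coord n B x k \<noteq> coord n B y k)"
  have Pj: "P j" using j jn P_def by simp
  have bnd: "\<forall>k. P k \<longrightarrow> k \<le> n" unfolding P_def by simp
  define G where "G = Greatest P"
  have g: "P G" using GreatestI_nat[of P j n] Pj bnd G_def by blast
  have le: "\<forall>k. P k \<longrightarrow> k \<le> G" using Greatest_le_nat[of P _ n] bnd G_def by blast
  have "\<forall>k. G < k \<longrightarrow> k < n \<longrightarrow> coord n B x k = coord n B y k"
  proof (intro allI impI)
    fix k assume "G < k" "k < n"
    then show "coord n B x k = coord n B y k" using le unfolding P_def by force
  qed
  then show ?thesis using g unfolding P_def by blast
qed

definition lexS :: "nat \<Rightarrow> ('a::ring_1 \<Rightarrow> 'a \<Rightarrow> bool) \<Rightarrow> (nat \<Rightarrow> nat \<Rightarrow> 'a)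
    \<Rightarrow> (nat \<Rightarrow> 'a) \<Rightarrow> (nat \<Rightarrow> 'a) \<Rightarrow> bool" where
  "lexS n lt B x y \<longleftrightarrow> x \<noteq> y \<and> lt (coord n B x (topd n B x y)) (coord n B y (topd n B x y))"

lemma lexless_same: "level B x = level B y \<Longrightarrow> lexless n lt B x y \<longleftrightarrow> lexS n lt B x y"
  unfolding lexless_def lexS_def topd_def Let_def by simp

lemma top_sym: "topd n B x y = topd n B y x"
proof -
  have "(\<lambda>k. k < n \<and> coord n B x k \<noteq> coord n B y k) = (\<lambda>k. k < n \<and> coord n B y k \<noteq> coord n B x k)" by auto
  then show ?thesis unfolding topd_def by simp
qed

lemma lexS_total:
  assumes "is_ordered_basis n B" "strict_total_order lt" "x \<in> carrier_vec n" "y \<in> carrier_vec n" "x \<noteq> y"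
  shows "lexS n lt B x y \<or> lexS n lt B y x"
proof -
  obtain k0 where k: "k0 < n" "coord n B x k0 \<noteq> coord n B y k0"
    "\<forall>k. k0 < k \<longrightarrow> k < n \<longrightarrow> coord n B x k = coord n B y k" using top_ex[OF assms(1,3,4,5)] by blast
  have t: "topd n B x y = k0" "topd n B y x = k0" using top_char[OF k] top_sym by metis+
  show ?thesis unfolding lexS_def t using assms(2,5) k(2) unfolding strict_total_order_def by metis
qed

lemma lexS_asym:
  assumes "strict_total_order lt" "lexS n lt B x y"
  shows "\<not> lexS n lt B y x"
proof
  assume "lexS n lt B y x"
  then have "lt (coord n B y (topd n B x y)) (coord n B x (topd n B x y))" unfolding lexS_def using top_sym[of n B x y] by simp
  moreover have "lt (coord n B x (topd n B x y)) (coord n B y (topd n B x y))" using assms(2) unfolding lexS_def by simp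
  ultimately show False using assms(1) unfolding strict_total_order_def by blast
qed

lemma lexS_trans:
  assumes ob: "is_ordered_basis n B" and so: "strict_total_order lt" and car: "x \<in> carrier_vec n" "y \<in> carrier_vec n" "z \<in> carrier_vec n"
    and xy: "lexS n lt B x y" and yz: "lexS n lt B y z"
  shows "lexS n lt B x z"
proof -
  have irr: "\<And>a. \<not> lt a a" and tr: "\<And>a b c. lt a b \<Longrightarrow> lt b c \<Longrightarrow> lt a c"
    using so unfolding strict_total_order_def by blast+
  have nxy: "x \<noteq> y" and nyz: "y \<noteq> z" using xy yz unfolding lexS_def by auto
  obtain k1 where k1: "k1 < n" "coord n B x k1 \<noteq> coord n B y k1"
    "\<forall>k. k1 < k \<longrightarrow> k < n \<longrightarrow> coord n B x k = coord n B y k" using top_ex[OF ob car(1,2) nxy] by blast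
  obtain k2 where k2: "k2 < n" "coord n B y k2 \<noteq> coord n B z k2"
    "\<forall>k. k2 < k \<longrightarrow> k < n \<longrightarrow> coord n B y k = coord n B z k" using top_ex[OF ob car(2,3) nyz] by blast
  have l1: "lt (coord n B x k1) (coord n B y k1)" using xy top_char[OF k1] unfolding lexS_def by simp
  have l2: "lt (coord n B y k2) (coord n B z k2)" using yz top_char[OF k2] unfolding lexS_def by simp
  define K where "K = max k1 k2"
  have lK: "lt (coord n B x K) (coord n B z K)"
  proof (cases k1 k2 rule: linorder_cases)
    case less
    then have "K = k2" "coord n B x k2 = coord n B y k2" using k1(3) k2(1) K_def by auto
    then show ?thesis using l2 by simp
  next
    case equal then show ?thesis using l1 l2 tr K_def by simp
  next
    case greater
    then have "K = k1" "coord n B y k1 = coord n B z k1" using k2(3) k1(1) K_def by auto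
    then show ?thesis using l1 by simp
  qed
  have Kn: "K < n" using k1 k2 K_def by simp
  have above: "\<forall>k. K < k \<longrightarrow> k < n \<longrightarrow> coord n B x k = coord n B z k" using k1(3) k2(3) K_def by auto
  have dK: "coord n B x K \<noteq> coord n B z K" using lK irr by metis
  have "topd n B x z = K" using top_char[OF Kn dK above] .
  moreover have "x \<noteq> z" using dK by auto
  ultimately show ?thesis unfolding lexS_def using lK by simp
qed

lemma least_unique:
  assumes "finite S" "S \<noteq> {}"
    and tr: "\<forall>x\<in>S. \<forall>y\<in>S. \<forall>z\<in>S. r x y \<longrightarrow> r y z \<longrightarrow> r x z"
    and tot: "\<forall>x\<in>S. \<forall>y\<in>S. x \<noteq> y \<longrightarrow> r x y \<or> r y x"
    and asy: "\<forall>x\<in>S. \<forall>y\<in>S. r x y \<longrightarrow> \<not> r y x"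
  shows "\<exists>!a. a \<in> S \<and> (\<forall>b\<in>S. b \<noteq> a \<longrightarrow> r a b)"
proof -
  have "\<exists>a. a \<in> S \<and> (\<forall>b\<in>S. b \<noteq> a \<longrightarrow> r a b)" using assms(1,2) tr tot
  proof (induction S rule: finite_ne_induct)
    case (singleton x) then show ?case by auto
  next
    case (insert x F)
    have trF: "\<forall>x\<in>F. \<forall>y\<in>F. \<forall>z\<in>F. r x y \<longrightarrow> r y z \<longrightarrow> r x z" using insert.prems(1) by blast
    have totF: "\<forall>x\<in>F. \<forall>y\<in>F. x \<noteq> y \<longrightarrow> r x y \<or> r y x" using insert.prems(2) by blast
    obtain m where m: "m \<in> F" "\<forall>b\<in>F. b \<noteq> m \<longrightarrow> r m b" using insert.IH[OF trF totF] by blast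
    show ?case
    proof (cases "r x m")
      case True
      have "\<forall>b\<in>insert x F. b \<noteq> x \<longrightarrow> r x b"
      proof (intro ballI impI)
        fix b assume b: "b \<in> insert x F" "b \<noteq> x"
        then have bF: "b \<in> F" by simp
        show "r x b"
        proof (cases "b = m")
          case True then show ?thesis using \<open>r x m\<close> by simp
        next
          case False
          then have "r m b" using m bF by blast
          then show ?thesis using \<open>r x m\<close> insert.prems(1) m(1) bF by blast
        qed
      qed
      then show ?thesis by blast
    next
      case False
      have "x \<noteq> m" using m(1) insert.hyps by blast
      then have "r x m \<or> r m x" using insert.prems(2) m(1) by blast
      then have "r m x" using False by blast
      then have "\<forall>b\<in>insert x F. b \<noteq> m \<longrightarrow> r m b" using m(2) by blast
      then show ?thesis using m(1) by blast
    qed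
  qed
  then obtain a where a: "a \<in> S" "\<forall>b\<in>S. b \<noteq> a \<longrightarrow> r a b" by blast
  show ?thesis
  proof (rule ex1I[of _ a])
    show "a \<in> S \<and> (\<forall>b\<in>S. b \<noteq> a \<longrightarrow> r a b)" using a by blast
    fix a' assume a': "a' \<in> S \<and> (\<forall>b\<in>S. b \<noteq> a' \<longrightarrow> r a' b)"
    show "a' = a"
    proof (rule ccontr)
      assume "a' \<noteq> a"
      then have "r a a'" "r a' a" using a a' by auto
      then show False using asy a(1) a' by blast
    qed
  qed
qed



lemma Vsp_mono:
  assumes "is_ordered_basis n B" "j \<le> i" "i \<le> n"
  shows "Vsp B j \<subseteq> Vsp B i"
  using Vsp_char[OF assms(1)] assms(2,3) by auto

lemma layer_char:
  assumes "is_ordered_basis n B" "i < n"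
  shows "x \<in> Vsp B (Suc i) - Vsp B i \<longleftrightarrow>
    x \<in> carrier_vec n \<and> coord n B x i \<noteq> 0 \<and> (\<forall>j. Suc i \<le> j \<longrightarrow> coord n B x j = 0)"
  using Vsp_char[OF assms(1), of "Suc i"] Vsp_char[OF assms(1), of i] assms(2)
  by (auto simp: Suc_le_eq) (metis le_eq_less_or_eq)

lemma level_layer:
  assumes "is_ordered_basis n B" "i < n" "x \<in> Vsp B (Suc i) - Vsp B i"
  shows "level B x = Suc i"
  unfolding level_def
proof (rule Least_equality)
  show "x \<in> Vsp B (Suc i)" using assms(3) by simp
  fix j assume j: "x \<in> Vsp B j"
  show "Suc i \<le> j"
  proof (rule ccontr)
    assume "\<not> Suc i \<le> j"
    then have "j \<le> i" by simp
    then have "x \<in> Vsp B i" using Vsp_mono[OF assms(1) _ ] assms(2) j by (meson less_imp_le subsetD)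
    then show False using assms(3) by simp
  qed
qed

lemma zero_carrier: "(\<lambda>k. 0) \<in> carrier_vec n"
  unfolding carrier_vec_def by simp

lemma coord_zero:
  assumes "is_ordered_basis n B"
  shows "coord n B (\<lambda>k. 0) = (\<lambda>j. 0)"
  by (rule coord_unique[OF assms zero_carrier]) (auto simp: lincomb_def)

lemma Vsp_vadd:
  assumes "is_ordered_basis n B" "i \<le> n" "x \<in> Vsp B i" "y \<in> Vsp B i"
  shows "vadd x y \<in> Vsp B i"
  using assms Vsp_char[OF assms(1,2)] carrier_vadd coord_vadd by (auto simp: coord_vadd)

lemma Vsp_smult:
  assumes "is_ordered_basis n B" "i \<le> n" "x \<in> Vsp B i"
  shows "smult r x \<in> Vsp B i"
  using assms Vsp_char[OF assms(1,2)] carrier_smult coord_smult by (auto simp: coord_smult)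

lemma pick_least:
  fixes lt :: "'a::{ring_1,finite} \<Rightarrow> 'a \<Rightarrow> bool"
  assumes ob: "is_ordered_basis n B" and so: "strict_total_order lt" and i: "i < n"
    and ne: "candidates B P \<Gamma> (Suc i) C \<noteq> {}"
  defines "S \<equiv> candidates B P \<Gamma> (Suc i) C"
  shows "(THE a. a \<in> S \<and> (\<forall>b\<in>S. b \<noteq> a \<longrightarrow> lexless n lt B a b)) \<in> S \<and>
     (\<forall>b\<in>S. b \<noteq> (THE a. a \<in> S \<and> (\<forall>b\<in>S. b \<noteq> a \<longrightarrow> lexless n lt B a b)) \<longrightarrow>
        lexless n lt B (THE a. a \<in> S \<and> (\<forall>b\<in>S. b \<noteq> a \<longrightarrow> lexless n lt B a b)) b)"
proof -
  have Slay: "S \<subseteq> Vsp B (Suc i) - Vsp B i" unfolding S_def candidates_def by auto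
  have Scar: "S \<subseteq> carrier_vec n" using Slay layer_char[OF ob i] by blast
  have lev: "\<And>x. x \<in> S \<Longrightarrow> level B x = Suc i" using level_layer[OF ob i] Slay by blast
  have eq: "\<And>x y. x \<in> S \<Longrightarrow> y \<in> S \<Longrightarrow> lexless n lt B x y \<longleftrightarrow> lexS n lt B x y"
    using lexless_same lev by metis
  have "\<exists>!a. a \<in> S \<and> (\<forall>b\<in>S. b \<noteq> a \<longrightarrow> lexless n lt B a b)"
  proof (rule least_unique)
    show "finite S" using Scar carrier_finite finite_subset by blast
    show "S \<noteq> {}" using ne S_def by simp
    show "\<forall>x\<in>S. \<forall>y\<in>S. \<forall>z\<in>S. lexless n lt B x y \<longrightarrow> lexless n lt B y z \<longrightarrow> lexless n lt B x z"
      using eq lexS_trans[OF ob so] Scar by blast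
    show "\<forall>x\<in>S. \<forall>y\<in>S. x \<noteq> y \<longrightarrow> lexless n lt B x y \<or> lexless n lt B y x"
      using eq lexS_total[OF ob so] Scar by blast
    show "\<forall>x\<in>S. \<forall>y\<in>S. lexless n lt B x y \<longrightarrow> \<not> lexless n lt B y x"
      using eq lexS_asym[OF so] by blast
  qed
  then show ?thesis by (rule theI')
qed



lemma greedy_Suc_cases:
  "greedy n lt B P \<Gamma> (Suc i) =
    (if candidates B P \<Gamma> (Suc i) (greedy n lt B P \<Gamma> i) = {} then greedy n lt B P \<Gamma> i
     else {vadd (smult r (THE a. a \<in> candidates B P \<Gamma> (Suc i) (greedy n lt B P \<Gamma> i) \<and>
        (\<forall>b\<in>candidates B P \<Gamma> (Suc i) (greedy n lt B P \<Gamma> i). b \<noteq> a \<longrightarrow> lexless n lt B a b))) c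
        | r c. c \<in> greedy n lt B P \<Gamma> i})"
  by (simp add: Let_def)

lemma vadd_smult0: "vadd (smult 0 a) c = c"
  unfolding vadd_def smult_def by simp

lemma in_span: "c \<in> G \<Longrightarrow> c \<in> {vadd (smult r a) c | r c. c \<in> G}"
  by (rule CollectI, rule exI[of _ 0], rule exI[of _ c]) (simp add: vadd_smult0)

lemma greedy_mono_Suc: "greedy n lt B P \<Gamma> i \<subseteq> greedy n lt B P \<Gamma> (Suc i)"
proof
  fix c assume c: "c \<in> greedy n lt B P \<Gamma> i"
  show "c \<in> greedy n lt B P \<Gamma> (Suc i)"
    unfolding greedy_Suc_cases using in_span[OF c] c by simp
qed

lemma greedy_mono: "i \<le> j \<Longrightarrow> greedy n lt B P \<Gamma> i \<subseteq> greedy n lt B P \<Gamma> j"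
proof (induction j)
  case 0 then show ?case by simp
next
  case (Suc j)
  then show ?case using greedy_mono_Suc by (metis le_Suc_eq order_refl order_trans)
qed

lemma span_step:
  fixes a :: "nat \<Rightarrow> 'a::ring_1"
  assumes ob: "is_ordered_basis n B" and i: "i < n" and a: "a \<in> Vsp B (Suc i)"
    and G: "G \<subseteq> Vsp B i" "left_submodule n G"
  defines "G' \<equiv> {vadd (smult r a) c | r c. c \<in> G}"
  shows "G' \<subseteq> Vsp B (Suc i) \<and> left_submodule n G'"
proof -
  have GV: "G \<subseteq> Vsp B (Suc i)" using G(1) Vsp_mono[OF ob, of i "Suc i"] i by auto
  have sub: "G' \<subseteq> Vsp B (Suc i)"
  proof
    fix y assume "y \<in> G'"
    then obtain r c where y: "y = vadd (smult r a) c" "c \<in> G" unfolding G'_def by blast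
    show "y \<in> Vsp B (Suc i)" unfolding y(1) using i GV y(2)
      by (intro Vsp_vadd[OF ob] Vsp_smult[OF ob] a) auto
  qed
  have car: "Vsp B (Suc i) \<subseteq> carrier_vec n" using Vsp_char[OF ob, of "Suc i"] i by auto
  have z: "(\<lambda>k. 0) \<in> G'" unfolding G'_def
    using G(2) unfolding left_submodule_def by (auto intro!: exI[of _ 0] simp: vadd_smult0)
  have add: "\<forall>x\<in>G'. \<forall>y\<in>G'. vadd x y \<in> G'"
  proof (intro ballI)
    fix x y assume "x \<in> G'" "y \<in> G'"
    then obtain r c r' c' where xy: "x = vadd (smult r a) c" "c \<in> G" "y = vadd (smult r' a) c'" "c' \<in> G"
      unfolding G'_def by blast
    have "vadd x y = vadd (smult (r+r') a) (vadd c c')" unfolding xy vadd_def smult_def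
      by (simp add: fun_eq_iff algebra_simps)
    moreover have "vadd c c' \<in> G" using G(2) xy unfolding left_submodule_def by blast
    ultimately show "vadd x y \<in> G'" unfolding G'_def by blast
  qed
  have sm: "\<forall>q. \<forall>x\<in>G'. smult q x \<in> G'"
  proof (intro allI ballI)
    fix q x assume "x \<in> G'"
    then obtain r c where x: "x = vadd (smult r a) c" "c \<in> G" unfolding G'_def by blast
    have "smult q x = vadd (smult (q*r) a) (smult q c)" unfolding x vadd_def smult_def
      by (simp add: fun_eq_iff algebra_simps)
    moreover have "smult q c \<in> G" using G(2) x unfolding left_submodule_def by blast
    ultimately show "smult q x \<in> G'" unfolding G'_def by blast
  qed
  show ?thesis using sub car z add sm unfolding left_submodule_def by blast
qed

lemma lgen_left_ideal: "left_ideal (lgen (r::'a::ring_1))"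
  unfolding left_ideal_def lgen_def
  by (auto, metis mult_zero_left, metis distrib_right, metis mult.assoc)

lemma lgen_self: "r \<in> lgen (r::'a::ring_1)"
  unfolding lgen_def by (auto intro: exI[of _ 1])

lemma P_step:
  fixes a :: "nat \<Rightarrow> 'a::{ring_1,finite}"
  assumes lm: "left_multiplicative n P" and gs: "generator_system \<Gamma>"
    and G: "left_submodule n G" "\<forall>x\<in>G. P x"
    and a: "a \<in> carrier_vec n" "\<forall>\<gamma>\<in>\<Gamma>. \<forall>c\<in>G. P (vadd (smult \<gamma> a) c)"
    and c: "c \<in> G"
  shows "P (vadd (smult r a) c)"
proof (cases "r = 0")
  case True then show ?thesis using G(2) c by (simp add: vadd_smult0)
next
  case False
  have "lgen r \<noteq> {0}" using lgen_self[of r] False by auto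
  then obtain \<gamma> where g: "\<gamma> \<in> \<Gamma>" "lgen \<gamma> = lgen r" using gs lgen_left_ideal[of r]
    unfolding generator_system_def by metis
  obtain s where s: "r = s*\<gamma>" using lgen_self[of r] g(2) unfolding lgen_def by auto
  obtain t where t: "\<gamma> = t*r" using lgen_self[of \<gamma>] g(2) unfolding lgen_def by auto
  obtain u where u: "is_unit u" "r = u*\<gamma>" using assoc_unit[OF s t] by blast
  obtain v where v: "u*v = 1" "v*u = 1" using u(1) unfolding is_unit_def by blast
  have vc: "smult v c \<in> G" using G(1) c unfolding left_submodule_def by blast
  have ccar: "c \<in> carrier_vec n" using G(1) c unfolding left_submodule_def by blast
  have eq: "vadd (smult r a) c = smult u (vadd (smult \<gamma> a) (smult v c))"
    unfolding vadd_def smult_def u(2) by (simp add: fun_eq_iff distrib_left mult.assoc[symmetric] v)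
  have "P (vadd (smult \<gamma> a) (smult v c))" using a(2) g(1) vc by blast
  moreover have "vadd (smult \<gamma> a) (smult v c) \<in> carrier_vec n"
    using a(1) ccar by (intro carrier_vadd carrier_smult)
  ultimately show ?thesis unfolding eq using lm u(1) unfolding left_multiplicative_def by blast
qed



lemma greedy_inv:
  fixes lt :: "'a::{ring_1,finite} \<Rightarrow> 'a \<Rightarrow> bool"
  assumes ob: "is_ordered_basis n B" and so: "strict_total_order lt"
    and lm: "left_multiplicative n P" and P0: "P (\<lambda>k. 0)" and gs: "generator_system \<Gamma>"
  shows "i \<le> n \<Longrightarrow> greedy n lt B P \<Gamma> i \<subseteq> Vsp B i \<and> left_submodule n (greedy n lt B P \<Gamma> i)
     \<and> (\<forall>x\<in>greedy n lt B P \<Gamma> i. P x)"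
proof (induction i)
  case 0
  have "(\<lambda>k. 0) \<in> Vsp B 0" unfolding Vsp_def lincomb_def by simp
  moreover have "left_submodule n {(\<lambda>k::nat. 0::'a)}"
    unfolding left_submodule_def vadd_def smult_def using zero_carrier by auto
  ultimately show ?case using P0 by simp
next
  case (Suc i)
  then have i: "i < n" by simp
  define G where "G = greedy n lt B P \<Gamma> i"
  define S where "S = candidates B P \<Gamma> (Suc i) G"
  define a where "a = (THE a. a \<in> S \<and> (\<forall>b\<in>S. b \<noteq> a \<longrightarrow> lexless n lt B a b))"
  have IH: "G \<subseteq> Vsp B i" "left_submodule n G" "\<forall>x\<in>G. P x" using Suc G_def by auto
  have Gs: "greedy n lt B P \<Gamma> (Suc i) = (if S = {} then G else {vadd (smult r a) c | r c. c \<in> G})"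
    unfolding greedy_Suc_cases G_def[symmetric] S_def[symmetric] a_def[symmetric] ..
  show ?case
  proof (cases "S = {}")
    case True
    then show ?thesis unfolding Gs using IH Vsp_mono[OF ob, of i "Suc i"] i by auto
  next
    case False
    have aS: "a \<in> S" using pick_least[OF ob so i False[unfolded S_def]] unfolding a_def S_def by blast
    have aV: "a \<in> Vsp B (Suc i)" and aP: "\<forall>\<gamma>\<in>\<Gamma>. \<forall>c\<in>G. P (vadd (smult \<gamma> a) c)"
      using aS unfolding S_def candidates_def by auto
    have acar: "a \<in> carrier_vec n" using aV Vsp_char[OF ob, of "Suc i"] i by auto
    have "{vadd (smult r a) c | r c. c \<in> G} \<subseteq> Vsp B (Suc i) \<and> left_submodule n {vadd (smult r a) c | r c. c \<in> G}"
      using span_step[OF ob i aV IH(1,2)] .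
    moreover have "\<forall>x\<in>{vadd (smult r a) c | r c. c \<in> G}. P x"
      using P_step[OF lm gs IH(2,3) acar aP] by blast
    ultimately show ?thesis unfolding Gs using False by simp
  qed
qed



lemma greedy_max:
  fixes lt :: "'a::{ring_1,finite} \<Rightarrow> 'a \<Rightarrow> bool"
  assumes ob: "is_ordered_basis n B" and resp: "respectful lt"
    and lm: "left_multiplicative n P" and P0: "P (\<lambda>k. 0)" and gs: "generator_system \<Gamma>"
    and plir: "principal_left_ideal_ring TYPE('a)"
    and C: "left_submodule n C" "greedy n lt B P \<Gamma> n \<subseteq> C" "\<forall>x\<in>C. P x"
  shows "i \<le> n \<Longrightarrow> C \<inter> Vsp B i \<subseteq> greedy n lt B P \<Gamma> i"
proof (induction i)
  case 0
  have "Vsp B 0 = {(\<lambda>k. 0)}" unfolding Vsp_def lincomb_def by simp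
  then show ?case by simp
next
  case (Suc i)
  then have i: "i < n" by simp
  have so: "strict_total_order lt" using resp respectful_def by blast
  have irr: "\<And>a. \<not> lt a a" and tr: "\<And>a b c. lt a b \<Longrightarrow> lt b c \<Longrightarrow> lt a c"
    using so unfolding strict_total_order_def by blast+
  define G where "G = greedy n lt B P \<Gamma> i"
  define S where "S = candidates B P \<Gamma> (Suc i) G"
  define a where "a = (THE a. a \<in> S \<and> (\<forall>b\<in>S. b \<noteq> a \<longrightarrow> lexless n lt B a b))"
  have IH: "C \<inter> Vsp B i \<subseteq> G" using Suc G_def by auto
  have Gi: "G \<subseteq> Vsp B i" "left_submodule n G" "\<forall>x\<in>G. P x"
    using greedy_inv[OF ob so lm P0 gs, of i] i G_def by auto
  have GC: "G \<subseteq> C" using greedy_mono[of i n n lt B P \<Gamma>] i C(2) G_def by auto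
  have Gs: "greedy n lt B P \<Gamma> (Suc i) = (if S = {} then G else {vadd (smult r a) c | r c. c \<in> G})"
    unfolding greedy_Suc_cases G_def[symmetric] S_def[symmetric] a_def[symmetric] ..
  have Cc: "C \<subseteq> carrier_vec n" "(\<lambda>k. 0) \<in> C" "\<forall>x\<in>C. \<forall>y\<in>C. vadd x y \<in> C" "\<forall>r. \<forall>x\<in>C. smult r x \<in> C"
    using C(1) unfolding left_submodule_def by auto
  define W where "W = C \<inter> Vsp B (Suc i)"
  have Wadd: "\<And>x y. x \<in> W \<Longrightarrow> y \<in> W \<Longrightarrow> vadd x y \<in> W"
    unfolding W_def using Cc(3) Vsp_vadd[OF ob, of "Suc i"] i by auto
  have Wsm: "\<And>r x. x \<in> W \<Longrightarrow> smult r x \<in> W"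
    unfolding W_def using Cc(4) Vsp_smult[OF ob, of "Suc i"] i by auto
  have Wcar: "W \<subseteq> carrier_vec n" unfolding W_def using Cc(1) by auto
  have Wcoord: "\<And>y j. y \<in> W \<Longrightarrow> Suc i \<le> j \<Longrightarrow> coord n B y j = 0"
    unfolding W_def using Vsp_char[OF ob, of "Suc i"] i by auto
  have inS: "y \<in> S" if "y \<in> W" "y \<notin> Vsp B i" for y
  proof -
    have "\<forall>\<gamma>\<in>\<Gamma>. \<forall>c\<in>G. P (vadd (smult \<gamma> y) c)"
      using that(1) GC Cc(3,4) C(3) unfolding W_def by blast
    then show ?thesis using that unfolding S_def candidates_def W_def by auto
  qed
  show ?case
  proof
    fix x assume xC: "x \<in> C \<inter> Vsp B (Suc i)"
    show "x \<in> greedy n lt B P \<Gamma> (Suc i)"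
    proof (cases "x \<in> Vsp B i")
      case True
      then have "x \<in> G" using IH xC by blast
      then show ?thesis using greedy_mono_Suc G_def by blast
    next
      case False
      have xW: "x \<in> W" using xC W_def by simp
      have xS: "x \<in> S" using inS[OF xW False] .
      then have Sne: "S \<noteq> {}" by blast
      have pl: "a \<in> S \<and> (\<forall>b\<in>S. b \<noteq> a \<longrightarrow> lexless n lt B a b)"
        using pick_least[OF ob so i Sne[unfolded S_def]] unfolding a_def S_def by blast
      have Gs': "greedy n lt B P \<Gamma> (Suc i) = {vadd (smult r a) c | r c. c \<in> G}" using Gs Sne by simp
      have aL: "a \<in> Vsp B (Suc i) - Vsp B i" using pl unfolding S_def candidates_def by auto
      have aG: "a \<in> greedy n lt B P \<Gamma> (Suc i)" unfolding Gs'
      proof (rule CollectI, rule exI[of _ 1], rule exI[of _ "\<lambda>k. 0"])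
        show "a = vadd (smult 1 a) (\<lambda>k. 0) \<and> (\<lambda>k. 0) \<in> G"
          using Gi(2) unfolding left_submodule_def vadd_def smult_def by simp
      qed
      have aC: "a \<in> C" using aG greedy_mono[of "Suc i" n n lt B P \<Gamma>] i C(2) by auto
      have aW: "a \<in> W" using aC aL W_def by simp
      have acar: "a \<in> carrier_vec n" using aW Wcar by auto
      define I where "I = {coord n B y i | y. y \<in> W}"
      have zW: "(\<lambda>k. 0) \<in> W" unfolding W_def using Cc(2) Vsp_char[OF ob, of "Suc i"] i coord_zero[OF ob] zero_carrier
        by auto
      have "left_ideal I" unfolding left_ideal_def
      proof (intro conjI ballI allI)
        show "0 \<in> I" unfolding I_def using zW coord_zero[OF ob] by (auto intro!: exI[of _ "\<lambda>k. 0"])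
        fix p q assume "p \<in> I" "q \<in> I"
        then obtain y y' where y: "p = coord n B y i" "y \<in> W" "q = coord n B y' i" "y' \<in> W" unfolding I_def by blast
        have yc: "y \<in> carrier_vec n" "y' \<in> carrier_vec n" using y(2,4) Wcar by auto
        have "p + q = coord n B (vadd y y') i" using y coord_vadd[OF ob yc] by simp
        then show "p + q \<in> I" unfolding I_def using Wadd[OF y(2,4)] by blast
      next
        fix r p assume "p \<in> I"
        then obtain y where y: "p = coord n B y i" "y \<in> W" unfolding I_def by blast
        have "r * p = coord n B (smult r y) i" using y coord_smult[OF ob] Wcar by auto
        then show "r * p \<in> I" unfolding I_def using Wsm[OF y(2)] by blast
      qed
      then obtain \<delta> where I\<delta>: "I = lgen \<delta>" using plir unfolding principal_left_ideal_ring_def by blast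
      define \<beta> where "\<beta> = coord n B a i"
      have \<beta>0: "\<beta> \<noteq> 0" using aL layer_char[OF ob i, of a] unfolding \<beta>_def by simp
      have \<beta>I: "lgen \<beta> \<subseteq> I"
      proof
        fix p assume "p \<in> lgen \<beta>"
        then obtain r where "p = r * \<beta>" unfolding lgen_def by blast
        then have "p = coord n B (smult r a) i" using coord_smult[OF ob acar] \<beta>_def by simp
        then show "p \<in> I" unfolding I_def using Wsm[OF aW] by blast
      qed
      show ?thesis
      proof (cases "I \<subseteq> lgen \<beta>")
        case True
        have "coord n B x i \<in> I" unfolding I_def using xW by blast
        then obtain r where r: "coord n B x i = r * \<beta>" using True unfolding lgen_def by blast
        define y where "y = vadd x (smult (-r) a)"
        have yW: "y \<in> W" unfolding y_def using Wadd[OF xW Wsm[OF aW]] .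
        have xcar: "x \<in> carrier_vec n" using xW Wcar by auto
        have cy: "coord n B y = (\<lambda>j. coord n B x j + (- r) * coord n B a j)"
          unfolding y_def using coord_vadd[OF ob xcar carrier_smult[OF acar]] coord_smult[OF ob acar] by simp
        have "y \<in> Vsp B i"
        proof -
          have "\<forall>j. i \<le> j \<longrightarrow> coord n B y j = 0"
          proof (intro allI impI)
            fix j assume "i \<le> j"
            then show "coord n B y j = 0"
            proof (cases "j = i")
              case True then show ?thesis using cy r \<beta>_def by simp
            next
              case False then show ?thesis using Wcoord[OF yW] \<open>i \<le> j\<close> by simp
            qed
          qed
          then show ?thesis using Vsp_char[OF ob, of i] i yW Wcar by auto
        qed
        then have yG: "y \<in> G" using IH yW W_def by blast
        have "x = vadd (smult r a) y" unfolding y_def vadd_def smult_def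
          by (simp add: fun_eq_iff algebra_simps)
        then show ?thesis unfolding Gs' using yG by blast
      next
        case False
        then have strict: "lgen \<beta> \<subset> lgen \<delta>" using \<beta>I I\<delta> by blast
        have \<delta>0: "\<delta> \<noteq> 0"
        proof
          assume "\<delta> = 0"
          then have "lgen \<delta> = {0}" unfolding lgen_def by auto
          moreover have "0 \<in> lgen \<beta>" unfolding lgen_def by (auto intro: exI[of _ 0])
          ultimately show False using strict by auto
        qed
        have R: "\<forall>x y. x \<noteq> 0 \<longrightarrow> y \<noteq> 0 \<longrightarrow> lgen y \<subset> lgen x \<longrightarrow>
          (\<exists>\<alpha>. is_unit \<alpha> \<and> (\<forall>u. is_unit u \<longrightarrow> lt (\<alpha> * x) (u * y)))"
          using resp unfolding respectful_def by blast
        obtain \<alpha> where \<alpha>: "is_unit \<alpha>" "\<forall>u. is_unit u \<longrightarrow> lt (\<alpha> * \<delta>) (u * \<beta>)"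
          using R[rule_format, OF \<delta>0 \<beta>0 strict] by blast
        have u1: "is_unit (1::'a)" unfolding is_unit_def by (auto intro: exI[of _ 1])
        have lt1: "lt (\<alpha> * \<delta>) \<beta>" using \<alpha>(2)[rule_format, OF u1] by simp
        have "\<delta> \<in> I" using lgen_self I\<delta> by blast
        then obtain y where y: "\<delta> = coord n B y i" "y \<in> W" unfolding I_def by blast
        define y' where "y' = smult \<alpha> y"
        have y'W: "y' \<in> W" unfolding y'_def using Wsm[OF y(2)] .
        have ycar: "y \<in> carrier_vec n" using y(2) Wcar by auto
        have cy': "coord n B y' i = \<alpha> * \<delta>" unfolding y'_def using coord_smult[OF ob ycar] y(1) by simp
        have ad0: "\<alpha> * \<delta> \<noteq> 0"
        proof
          assume h: "\<alpha> * \<delta> = 0"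
          obtain v where "v * \<alpha> = 1" using \<alpha>(1) unfolding is_unit_def by blast
          then have "\<delta> = v * (\<alpha> * \<delta>)" by (simp add: mult.assoc[symmetric])
          then show False using h \<delta>0 by simp
        qed
        have y'car: "y' \<in> carrier_vec n" using y'W Wcar by auto
        have y'L: "y' \<in> Vsp B (Suc i) - Vsp B i"
          unfolding layer_char[OF ob i] using y'car cy' ad0 Wcoord[OF y'W] by simp
        have y'S: "y' \<in> S" using inS y'W y'L by blast
        have ne: "y' \<noteq> a" using cy' \<beta>_def lt1 irr by auto
        have "lexless n lt B a y'" using pl y'S ne by blast
        moreover have "level B a = level B y'" using level_layer[OF ob i] aL y'L by simp
        ultimately have lx: "lexS n lt B a y'" using lexless_same by blast
        have "topd n B a y' = i"
        proof (rule top_char)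
          show "i < n" using i .
          show "coord n B a i \<noteq> coord n B y' i" using ne cy' \<beta>_def lt1 irr by auto
          show "\<forall>k. i < k \<longrightarrow> k < n \<longrightarrow> coord n B a k = coord n B y' k"
            using Wcoord[OF aW] Wcoord[OF y'W] by (simp add: Suc_le_eq)
        qed
        then have "lt \<beta> (\<alpha> * \<delta>)" using lx cy' \<beta>_def unfolding lexS_def by simp
        then have "lt \<beta> \<beta>" using tr lt1 by blast
        then show ?thesis using irr by blast
      qed
    qed
  qed
qed

theorem mainTheorem8:
  fixes n :: nat
    and lt :: "'a::{ring_1,finite} \<Rightarrow> 'a \<Rightarrow> bool"
    and B :: "nat \<Rightarrow> nat \<Rightarrow> 'a"
    and P :: "(nat \<Rightarrow> 'a) \<Rightarrow> bool"
    and \<Gamma> :: "'a set"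
  assumes "principal_left_ideal_ring TYPE('a)"
    and "respectful lt"
    and "is_ordered_basis n B"
    and "left_multiplicative n P"
    and "P (\<lambda>k. 0)"
    and "generator_system \<Gamma>"
  shows "left_submodule n (lexicode n lt B P \<Gamma>)
       \<and> (\<forall>x\<in>lexicode n lt B P \<Gamma>. P x)
       \<and> \<not> (\<exists>C. left_submodule n C \<and> lexicode n lt B P \<Gamma> \<subset> C \<and> (\<forall>x\<in>C. P x))"
proof -
  have so: "strict_total_order lt" using assms(2) respectful_def by blast
  have inv: "greedy n lt B P \<Gamma> n \<subseteq> Vsp B n \<and> left_submodule n (greedy n lt B P \<Gamma> n)
     \<and> (\<forall>x\<in>greedy n lt B P \<Gamma> n. P x)" using greedy_inv[OF assms(3) so assms(4,5,6), of n] by simp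
  have "\<not> (\<exists>C. left_submodule n C \<and> lexicode n lt B P \<Gamma> \<subset> C \<and> (\<forall>x\<in>C. P x))"
  proof
    assume "\<exists>C. left_submodule n C \<and> lexicode n lt B P \<Gamma> \<subset> C \<and> (\<forall>x\<in>C. P x)"
    then obtain C where C: "left_submodule n C" "greedy n lt B P \<Gamma> n \<subset> C" "\<forall>x\<in>C. P x"
      unfolding lexicode_def by blast
    have m: "C \<inter> Vsp B n \<subseteq> greedy n lt B P \<Gamma> n"
      using greedy_max[OF assms(3,2,4,5,6,1) C(1) _ C(3), of n] C(2) by blast
    have "C \<subseteq> Vsp B n"
    proof
      fix x assume "x \<in> C"
      then have xc: "x \<in> carrier_vec n" using C(1) unfolding left_submodule_def by blast
      then show "x \<in> Vsp B n" using Vsp_char[OF assms(3), of n] coord_spec[OF assms(3) xc] by auto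
    qed
    then show False using m C(2) by blast
  qed
  then show ?thesis using inv unfolding lexicode_def by blast
qed

end
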